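(* Let $q=p^n$ with $p>2$ prime, let $g\ge 2$ be an integer with $\gcd(g,p)=1$, and let $c\in\mathbb{F}_q$ be such that $C': y^2=x^{2g+1}+c\,x^{g+1}+x$ is a (nonsingular) hyperelliptic curve of genus $g$ over $\mathbb{F}_q$. Let $s$ be the involution $s:(x,y)\mapsto\left(\frac1x,\frac{y}{x^{g+1}}\right)$ of $C'$ and $\omega:(x,y)\mapsto(x,-y)$ the hyperelliptic involution. Then: 1. The quotient curve $C'/\langle s\rangle$ is given (i.e. is birationally equivalent over $\mathbb{F}_q$ to the curve given) by $X_1': y^2=D_g(x)+c$ if $g$ is odd, and by $X_1': y^2=(x+2)(D_g(x)+c)$ if $g$ is even. 2. The quotient curve $C'/\langle s\omega\rangle$, where $s\omega:(x,y)\mapsto\left(\frac1x,-\frac{y}{x^{g+1}}\right)$, is given by $X_2': y^2=(x^2-4)(D_g(x)+c)$ if $g$ is odd, and by $X_2': y^2=(x-2)(D_g(x)+c)$ if $g$ is even.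
   Context: For $m\ge1$ and $\alpha$ in a field, the Dickson polynomial $D_m(x,\alpha)=\sum_{i=0}^{\lfloor m/2\rfloor}\frac{m}{m-i}\binom{m-i}{i}(-\alpha)^i x^{m-2i}$ is the unique polynomial satisfying $D_m\!\left(u+\frac{\alpha}{u},\alpha\right)=u^m+\left(\frac{\alpha}{u}\right)^m$; we write $D_m(x):=D_m(x,1)$. *)

theory Defs
  imports "HOL-Computational_Algebra.Polynomial_Factorial"
          "HOL-Algebra.Generated_Fields"
begin

text \<open>The rational coefficient m/(m-i) binom(m-i,i) is an integer; we compute it in the
  integers (exact division) and map it into the field.\<close>

definition dickson_coeff :: "nat \<Rightarrow> nat \<Rightarrow> nat" where
  "dickson_coeff m i = (m * ((m - i) choose i)) div (m - i)"

definition dickson :: "nat \<Rightarrow> 'a::comm_ring_1 \<Rightarrow> 'a poly" where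
  "dickson m \<alpha> = (\<Sum>i = 0..m div 2. Polynomial.monom (of_nat (dickson_coeff m i) * (-\<alpha>) ^ i) (m - 2 * i))"

abbreviation dickson1 :: "nat \<Rightarrow> 'a::comm_ring_1 poly" where
  "dickson1 m \<equiv> dickson m 1"

type_synonym 'a rf = "'a poly fract"

definition rf_const :: "'a::field \<Rightarrow> 'a rf" where
  "rf_const a = Fract [:a:] 1"

definition rf_X :: "'a::field rf" where
  "rf_X = Fract [:0, 1:] 1"

definition rf_of_poly :: "'a::field poly \<Rightarrow> 'a rf" where
  "rf_of_poly p = Fract p 1"

definition rf_eval :: "'a::field poly \<Rightarrow> 'a rf \<Rightarrow> 'a rf" where
  "rf_eval p z = poly (map_poly rf_const p) z"

definition rf_inv_subst :: "'a::field rf \<Rightarrow> 'a rf" where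
  "rf_inv_subst r = (SOME s. \<exists>p q. q \<noteq> 0 \<and> r = Fract p q \<and>
      s = rf_eval p (inverse rf_X) / rf_eval q (inverse rf_X))"

text \<open>The function field F(C) of the curve C: y^2 = f(x) (f not a square), modelled as
  F(x)[y]/(y^2 - f): the pair (a, b) stands for a + b*y.\<close>
definition FF :: "'a::field poly \<Rightarrow> ('a rf \<times> 'a rf) ring" where
  "FF f = \<lparr> carrier = UNIV,
            mult = (\<lambda>(a, b) (c, d). (a * c + b * d * rf_of_poly f, a * d + b * c)),
            one = (1, 0),
            zero = (0, 0),
            add = (\<lambda>(a, b) (c, d). (a + c, b + d)) \<rparr>"

definition FF_const :: "'a::field \<Rightarrow> 'a rf \<times> 'a rf" where
  "FF_const a = (rf_const a, 0)"

definition FF_eval :: "'a::field poly \<Rightarrow> 'a poly \<Rightarrow> 'a rf \<times> 'a rf \<Rightarrow> 'a rf \<times> 'a rf" where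
  "FF_eval f p z = foldr (\<lambda>a acc. FF_const a \<oplus>\<^bsub>FF f\<^esub> (z \<otimes>\<^bsub>FF f\<^esub> acc)) (coeffs p) \<zero>\<^bsub>FF f\<^esub>"

definition FF_transcendental :: "'a::field poly \<Rightarrow> 'a rf \<times> 'a rf \<Rightarrow> bool" where
  "FF_transcendental f z \<longleftrightarrow> (\<forall>p::'a poly. p \<noteq> 0 \<longrightarrow> FF_eval f p z \<noteq> \<zero>\<^bsub>FF f\<^esub>)"

definition FF_gen :: "'a::field poly \<Rightarrow> ('a rf \<times> 'a rf) set \<Rightarrow> ('a rf \<times> 'a rf) set" where
  "FF_gen f S = generate_field (FF f) (range FF_const \<union> S)"

text \<open>Action on F(C) (by pullback) of the involutions of C: y^2 = f(x), with
  s : (x,y) |-> (1/x, y/x^(g+1)) and s omega : (x,y) |-> (1/x, -y/x^(g+1)).\<close>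
definition act_s :: "nat \<Rightarrow> 'a::field rf \<times> 'a rf \<Rightarrow> 'a rf \<times> 'a rf" where
  "act_s g = (\<lambda>(a, b). (rf_inv_subst a, rf_inv_subst b / rf_X ^ (g + 1)))"

definition act_s_omega :: "nat \<Rightarrow> 'a::field rf \<times> 'a rf \<Rightarrow> 'a rf \<times> 'a rf" where
  "act_s_omega g = (\<lambda>(a, b). (rf_inv_subst a, - (rf_inv_subst b / rf_X ^ (g + 1))))"

definition fixed_field :: "('b \<Rightarrow> 'b) \<Rightarrow> 'b set" where
  "fixed_field \<tau> = {z. \<tau> z = z}"

text \<open>The quotient curve C/<tau> (whose function field is the fixed field F(C)^tau) is
  birationally equivalent over F to the curve y^2 = h(x): there is an F-isomorphism from
  F(x)[y]/(y^2 - h) onto F(C)^tau, i.e. elements u, v of the fixed field with u transcendental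
  over F, v not in F(u), v^2 = h(u), and F(u, v) = F(C)^tau.\<close>
definition quotient_given_by :: "'a::field poly \<Rightarrow> ('a rf \<times> 'a rf \<Rightarrow> 'a rf \<times> 'a rf) \<Rightarrow> 'a poly \<Rightarrow> bool" where
  "quotient_given_by f \<tau> h \<longleftrightarrow>
     (\<exists>u v. u \<in> fixed_field \<tau> \<and> v \<in> fixed_field \<tau> \<and>
            FF_transcendental f u \<and>
            v \<notin> FF_gen f {u} \<and>
            v \<otimes>\<^bsub>FF f\<^esub> v = FF_eval f h u \<and>
            FF_gen f {u, v} = fixed_field \<tau>)"

definition Cpoly :: "nat \<Rightarrow> 'a::field \<Rightarrow> 'a poly" where
  "Cpoly g c = Polynomial.monom 1 (2 * g + 1) + Polynomial.monom c (g + 1) + Polynomial.monom 1 1"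

end

theory Submission
  imports Defs
begin



lemma dc_zero: "m < 2*i \<Longrightarrow> dickson_coeff m i = 0"
  by (simp add: dickson_coeff_def binomial_eq_0)

lemma dc_formula: "dickson_coeff m i = (if i < m then (m - i choose i) + (if i = 0 then 0 else (m - i - 1 choose (i - 1))) else 0)"
proof (cases "i < m")
  case True
  have key: "m * (m - i choose i) = (m - i) * ((m - i choose i) + (if i = 0 then 0 else (m - i - 1 choose (i - 1))))"
  proof (cases i)
    case 0 then show ?thesis by simp
  next
    case (Suc k)
    obtain n where n: "m - i = Suc n" using True by (metis Suc_diff_Suc zero_less_diff) 
    have "Suc k * (Suc n choose Suc k) = Suc n * (n choose k)" by (rule Suc_times_binomial)
    moreover have "m = Suc n + Suc k" using n Suc True by simp
    ultimately show ?thesis using n Suc by (simp add: algebra_simps)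
  qed
  have "m - i > 0" using True by simp
  then show ?thesis using True unfolding dickson_coeff_def key by simp
next
  case False then show ?thesis by (simp add: dickson_coeff_def)
qed

lemma dc_rec: "m \<ge> 1 \<Longrightarrow> dickson_coeff (m+2) (j+1) = dickson_coeff (m+1) (j+1) + dickson_coeff m j"
proof -
  assume m: "m \<ge> 1"
  consider "j > m" | "j = m" | "j < m" by linarith
  then show ?thesis
  proof cases
    case 1 then show ?thesis by (simp add: dc_formula)
  next
    case 2 then show ?thesis using m by (simp add: dc_formula)
  next
    case 3
    have e: "m + 2 - (j+1) = Suc (m - j)" using 3 by simp
    have p1: "(m + 2 - (j+1) choose (j+1)) = (m - j choose (j+1)) + (m - j choose j)"
      unfolding e by simp
    have p2: "(m - j choose j) = (m - j - 1 choose j) + (if j = 0 then 0 else (m - j - 1 choose (j - 1)))"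
    proof (cases j)
      case 0 then show ?thesis by simp
    next
      case (Suc k)
      obtain n where n: "m - j = Suc n" using 3 by (metis Suc_diff_Suc zero_less_diff)
      show ?thesis using n Suc by simp
    qed
    show ?thesis using 3 p1 p2 by (simp add: dc_formula)
  qed
qed

definition E :: "nat \<Rightarrow> 'a::comm_ring_1 \<Rightarrow> 'a" where
  "E m t = (\<Sum>i\<le>m. of_nat (dickson_coeff m i) * (-1)^i * t^(m - 2*i))"

lemma poly_dickson: "poly (dickson m 1) t = E m t"
proof -
  have "poly (dickson m 1) t = (\<Sum>i = 0..m div 2. of_nat (dickson_coeff m i) * (-1)^i * t^(m - 2*i))"
    by (simp add: dickson_def poly_sum poly_monom)
  also have "\<dots> = (\<Sum>i\<le>m. of_nat (dickson_coeff m i) * (-1)^i * t^(m - 2*i))"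
  proof (rule sum.mono_neutral_left)
    show "finite {..m}" by simp
    show "{0..m div 2} \<subseteq> {..m}" by auto
    show "\<forall>i\<in>{..m} - {0..m div 2}. of_nat (dickson_coeff m i) * (-1)^i * t^(m - 2*i) = (0::'a)"
      by (auto simp: dc_zero)
  qed
  finally show ?thesis by (simp add: E_def)
qed

lemma E_1: "E 1 t = t"
  by (simp add: E_def dickson_coeff_def)

lemma E_2: "E 2 t = t^2 - 2"
  by (simp add: E_def dickson_coeff_def numeral_2_eq_2 atMost_Suc)

lemma E_rec: "m \<ge> 1 \<Longrightarrow> E (m+2) t = t * E (m+1) t - E m t"
proof -
  assume m: "m \<ge> 1"
  define f where "f j = of_nat (dickson_coeff (m+2) (j+1)) * (-1)^(j+1) * t^(m - 2*j)" for j
  define g where "g j = t * (of_nat (dickson_coeff (m+1) (j+1)) * (-1)^(j+1) * t^(m - 1 - 2*j))" for j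
  define h where "h j = of_nat (dickson_coeff m j) * (-1)^j * t^(m - 2*j)" for j
  have d0: "\<And>k. k \<ge> 1 \<Longrightarrow> dickson_coeff k 0 = 1" by (simp add: dickson_coeff_def)
  have s1: "E (m+2) t = t^(m+2) + (\<Sum>j\<le>m+1. f j)"
  proof -
    define F where "F i = of_nat (dickson_coeff (m+2) i) * (-1)^i * t^(m + 2 - 2*i)" for i
    have "E (m+2) t = (\<Sum>i\<le>Suc (m+1). F i)" by (simp add: E_def F_def)
    also have "\<dots> = F 0 + (\<Sum>j\<le>m+1. F (Suc j))" by (rule sum.atMost_Suc_shift)
    also have "F 0 = t^(m+2)" using d0[of "m+2"] by (simp add: F_def)
    also have "(\<Sum>j\<le>m+1. F (Suc j)) = (\<Sum>j\<le>m+1. f j)"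
    proof (rule sum.cong)
      fix j assume "j \<in> {..m+1}"
      have "m + 2 - 2 * Suc j = m - 2*j" by simp
      then show "F (Suc j) = f j" by (simp add: F_def f_def)
    qed simp
    finally show ?thesis .
  qed
  have s2: "t * E (m+1) t = t^(m+2) + (\<Sum>j\<le>m+1. g j)"
  proof -
    define F where "F i = of_nat (dickson_coeff (m+1) i) * (-1)^i * t^(m + 1 - 2*i)" for i
    define G where "G j = of_nat (dickson_coeff (m+1) (j+1)) * (-1)^(j+1) * t^(m - 1 - 2*j)" for j
    have "E (m+1) t = (\<Sum>i\<le>Suc m. F i)" by (simp add: E_def F_def)
    also have "\<dots> = F 0 + (\<Sum>j\<le>m. F (Suc j))" by (rule sum.atMost_Suc_shift)
    also have "F 0 = t^(m+1)" using d0[of "m+1"] by (simp add: F_def)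
    also have "(\<Sum>j\<le>m. F (Suc j)) = (\<Sum>j\<le>m. G j)"
    proof (rule sum.cong)
      fix j assume "j \<in> {..m}"
      have "m + 1 - 2 * Suc j = m - 1 - 2*j" by simp
      then show "F (Suc j) = G j" by (simp add: F_def G_def)
    qed simp
    finally have A: "E (m+1) t = t^(m+1) + (\<Sum>j\<le>m. G j)" .
    have gm: "g (m+1) = 0" by (simp add: g_def dc_zero)
    have "(\<Sum>j\<le>m+1. g j) = (\<Sum>j\<le>m. g j) + g (m+1)" by (simp only: Suc_eq_plus1[symmetric] sum.atMost_Suc)
    also have "\<dots> = (\<Sum>j\<le>m. t * G j)" using gm by (simp add: g_def G_def)
    also have "\<dots> = t * (\<Sum>j\<le>m. G j)" by (rule sum_distrib_left[symmetric])
    finally have B: "(\<Sum>j\<le>m+1. g j) = t * (\<Sum>j\<le>m. G j)" .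
    have "t * E (m+1) t = t * t^(m+1) + t * (\<Sum>j\<le>m. G j)" unfolding A by (rule distrib_left)
    also have "t * t^(m+1) = t^(m+2)" by simp
    finally show ?thesis unfolding B .
  qed
  have s3: "E m t = (\<Sum>j\<le>m+1. h j)"
  proof -
    have "h (m+1) = 0" by (simp add: h_def dc_zero)
    moreover have "(\<Sum>j\<le>m+1. h j) = (\<Sum>j\<le>m. h j) + h (m+1)" by (simp only: Suc_eq_plus1[symmetric] sum.atMost_Suc)
    moreover have "E m t = (\<Sum>j\<le>m. h j)" unfolding E_def h_def ..
    ultimately show ?thesis by simp
  qed
  have fj: "\<And>j. f j = g j - h j"
  proof -
    fix j
    show "f j = g j - h j"
    proof (cases "2*j + 1 \<le> m")
      case True
      have "m - 2*j = Suc (m - 1 - 2*j)" using True by linarith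
      then have tt: "t^(m - 2*j) = t * t^(m - 1 - 2*j)" by simp
      show ?thesis unfolding f_def g_def h_def tt dc_rec[OF m, of j]
        by (simp add: algebra_simps)
    next
      case False
      then have "dickson_coeff (m+1) (j+1) = 0" by (intro dc_zero) simp
      then show ?thesis unfolding f_def g_def h_def using dc_rec[OF m, of j]
        by (simp add: algebra_simps)
    qed
  qed
  have s4: "(\<Sum>j\<le>m+1. f j) = (\<Sum>j\<le>m+1. g j) - (\<Sum>j\<le>m+1. h j)"
    by (simp only: fj sum_subtractf)
  show ?thesis by (simp only: s1 s2 s3 s4) (simp add: algebra_simps)
qed

lemma pow_t0: fixes x y a b :: "'b::field" shows "x*y = 1 \<Longrightarrow> (x+y)*(x*a+y*b) - (a+b) = x*x*a + y*y*b"
proof -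
  assume h: "x*y = 1"
  have "(x+y)*(x*a+y*b) - (a+b) = x*x*a + y*y*b + (x*y - 1)*(a+b)" by (simp add: algebra_simps)
  then show ?thesis using h by simp
qed
lemma pow_t1: fixes x y :: "'b::field" shows "x*y = 1 \<Longrightarrow> (x+y)*(x^(k+1)+y^(k+1)) - (x^k+y^k) = x^(k+2) + y^(k+2)"
proof -
  assume h: "x*y = 1"
  have e: "x^(k+1) = x*x^k" "y^(k+1) = y*y^k" "x^(k+2) = x*x*x^k" "y^(k+2) = y*y*y^k"
    by (simp_all add: numeral_2_eq_2)
  show ?thesis unfolding e using pow_t0[OF h] .
qed
lemma pow_t2: fixes x y :: "'b::field" shows "x*y = 1 \<Longrightarrow> (x+y)^2 - 2 = x^2 + y^2"
proof -
  assume h: "x*y = 1"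
  have "(x+y)^2 - 2 = x^2 + y^2 + 2*(x*y - 1)" by (simp add: algebra_simps power2_eq_square)
  then show ?thesis using h by simp
qed

lemma E_inv: 
  fixes x :: "'a::field"
  assumes "x \<noteq> 0" "m \<ge> 1"
  shows "E m (x + inverse x) = x^m + inverse x ^ m"
proof -
  define y where "y = inverse x"
  define z where "z = x + y"
  have xy: "x * y = 1" using assms(1) by (simp add: y_def)
  have stp: "E (k+2) z = x^(k+2) + y^(k+2)"
    if "k \<ge> 1" "E k z = x^k + y^k" "E (k+1) z = x^(k+1) + y^(k+1)" for k
  proof -
    have "E (k+2) z = z * E (k+1) z - E k z" using that(1) by (rule E_rec)
    also have "\<dots> = (x+y)*(x^(k+1)+y^(k+1)) - (x^k+y^k)" by (simp only: that(2) that(3)) (simp only: z_def)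
    also have "\<dots> = x^(k+2) + y^(k+2)" by (rule pow_t1[OF xy])
    finally show ?thesis .
  qed
  have b1: "E 1 z = x^1 + y^1" using E_1[of z] by (simp add: z_def)
  have "E 2 z = x^2 + y^2" using E_2[of z] pow_t2[OF xy] by (simp only: z_def)
  then have b2: "E (1+1) z = x^(1+1) + y^(1+1)" by (simp only: one_add_one)
  have "\<forall>k\<ge>1. E k z = x^k + y^k \<and> E (k+1) z = x^(k+1) + y^(k+1)"
  proof (intro allI impI)
    fix k :: nat assume "k \<ge> 1"
    then show "E k z = x^k + y^k \<and> E (k+1) z = x^(k+1) + y^(k+1)"
    proof (induction k rule: dec_induct)
      case base show ?case using b1 b2 by blast
    next
      case (step k)
      have "E (k+2) z = x^(k+2) + y^(k+2)" using step.hyps(1) step.IH by (intro stp) auto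
      then have "E (Suc k + 1) z = x^(Suc k + 1) + y^(Suc k + 1)" by simp
      then show ?case using step.IH by simp
    qed
  qed
  then show ?thesis using assms(2) by (simp add: y_def z_def)
qed




abbreviation Y :: "'a::field rf" where "Y \<equiv> inverse rf_X"

lemma rf_const_0[simp]: "rf_const 0 = 0" by (simp add: rf_const_def fract_collapse)
lemma rf_const_1[simp]: "rf_const 1 = 1" by (simp add: rf_const_def fract_collapse one_pCons[symmetric])
lemma rf_const_add[simp]: "rf_const (a + b) = rf_const a + rf_const b" by (simp add: rf_const_def)
lemma rf_const_mult[simp]: "rf_const (a * b) = rf_const a * rf_const b" by (simp add: rf_const_def mult.commute)
lemma rf_const_uminus[simp]: "rf_const (- a) = - rf_const a" by (simp add: rf_const_def)
lemma rf_const_diff[simp]: "rf_const (a - b) = rf_const a - rf_const b" by (simp add: rf_const_def)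
lemma rf_const_of_nat[simp]: "rf_const (of_nat k) = of_nat k" by (induct k) simp_all
lemma rf_const_numeral[simp]: "rf_const (numeral k) = numeral k"
  using rf_const_of_nat[of "numeral k"] by simp
lemma rf_const_power[simp]: "rf_const (a ^ n) = rf_const a ^ n" by (induct n) simp_all
lemma rf_const_eq_0[simp]: "rf_const a = 0 \<longleftrightarrow> a = 0"
  by (simp add: rf_const_def fract_expand eq_fract)

lemma rf_of_poly_0[simp]: "rf_of_poly 0 = 0" by (simp add: rf_of_poly_def fract_collapse)
lemma rf_of_poly_1[simp]: "rf_of_poly 1 = 1" by (simp add: rf_of_poly_def fract_collapse)
lemma rf_of_poly_add[simp]: "rf_of_poly (a + b) = rf_of_poly a + rf_of_poly b" by (simp add: rf_of_poly_def)
lemma rf_of_poly_mult[simp]: "rf_of_poly (a * b) = rf_of_poly a * rf_of_poly b" by (simp add: rf_of_poly_def)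
lemma rf_of_poly_uminus[simp]: "rf_of_poly (- a) = - rf_of_poly a" by (simp add: rf_of_poly_def)
lemma rf_of_poly_diff[simp]: "rf_of_poly (a - b) = rf_of_poly a - rf_of_poly b" by (simp add: rf_of_poly_def)
lemma rf_of_poly_power[simp]: "rf_of_poly (a ^ n) = rf_of_poly a ^ n" by (induct n) simp_all
lemma rf_of_poly_eq_iff[simp]: "rf_of_poly a = rf_of_poly b \<longleftrightarrow> a = b"
  by (simp add: rf_of_poly_def eq_fract)
lemma rf_of_poly_eq_0[simp]: "rf_of_poly a = 0 \<longleftrightarrow> a = 0"
  by (simp add: rf_of_poly_def fract_expand eq_fract)
lemma rf_of_poly_const[simp]: "rf_of_poly [:a:] = rf_const a" by (simp add: rf_of_poly_def rf_const_def)
lemma rf_of_poly_X: "rf_of_poly [:0,1:] = rf_X" by (simp add: rf_of_poly_def rf_X_def)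
lemma rf_X_nz[simp]: "(rf_X :: 'a::field rf) \<noteq> 0"
  by (metis rf_of_poly_X rf_of_poly_eq_0 pCons_eq_0_iff one_neq_zero)
lemma rf_of_poly_smult[simp]: "rf_of_poly (Polynomial.smult a p) = rf_const a * rf_of_poly p"
proof -
  have "Polynomial.smult a p = [:a:] * p" by simp
  then show ?thesis by (metis rf_of_poly_const rf_of_poly_mult)
qed
lemma rf_of_poly_sum: "rf_of_poly (\<Sum>i\<in>A. f i) = (\<Sum>i\<in>A. rf_of_poly (f i))"
  by (induct A rule: infinite_finite_induct) simp_all
lemma rf_of_poly_monom: "rf_of_poly (Polynomial.monom a n) = rf_const a * rf_X ^ n"
  by (simp add: monom_altdef rf_of_poly_X)
lemma rf_of_poly_pCons: "rf_of_poly (pCons a p) = rf_const a + rf_X * rf_of_poly p"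
proof -
  have "pCons a p = [:a:] + [:0,1:] * p" by simp
  then show ?thesis by (metis rf_of_poly_add rf_of_poly_const rf_of_poly_mult rf_of_poly_X)
qed
lemma Fract_as_div: "q \<noteq> 0 \<Longrightarrow> Fract p q = rf_of_poly p / rf_of_poly q"
  by (simp add: rf_of_poly_def)

lemma rf_eval_pCons[simp]: "rf_eval (pCons a p) z = rf_const a + z * rf_eval p z"
  by (simp add: rf_eval_def map_poly_pCons)
lemma rf_eval_0[simp]: "rf_eval 0 z = 0" by (simp add: rf_eval_def)
lemma rf_eval_const[simp]: "rf_eval [:a:] z = rf_const a" by simp
lemma rf_eval_add[simp]: "rf_eval (p + q) z = rf_eval p z + rf_eval q z"
  by (induct p arbitrary: q; case_tac q; simp add: algebra_simps)
lemma rf_eval_smult[simp]: "rf_eval (Polynomial.smult a p) z = rf_const a * rf_eval p z"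
  by (induct p) (simp_all add: algebra_simps)
lemma rf_eval_mult[simp]: "rf_eval (p * q) z = rf_eval p z * rf_eval q z"
  by (induct p) (simp_all add: algebra_simps)
lemma rf_eval_uminus[simp]: "rf_eval (- p) z = - rf_eval p z"
  by (metis add.right_inverse add_eq_0_iff rf_eval_add rf_eval_0)
lemma rf_eval_diff[simp]: "rf_eval (p - q) z = rf_eval p z - rf_eval q z"
  by (metis diff_conv_add_uminus rf_eval_add rf_eval_uminus)
lemma rf_eval_1[simp]: "rf_eval 1 z = 1" by (subst one_pCons) (simp only: rf_eval_pCons rf_eval_0 rf_const_1 mult_zero_right add_0_right)
lemma rf_eval_power[simp]: "rf_eval (p ^ n) z = rf_eval p z ^ n" by (induct n) simp_all
lemma rf_eval_X[simp]: "rf_eval [:0,1:] z = z" by simp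
lemma rf_eval_monom[simp]: "rf_eval (Polynomial.monom a n) z = rf_const a * z ^ n"
  by (simp add: monom_altdef)
lemma rf_eval_sum: "rf_eval (\<Sum>i\<in>A. f i) z = (\<Sum>i\<in>A. rf_eval (f i) z)"
  by (induct A rule: infinite_finite_induct) simp_all
lemma rf_eval_at_X: "rf_eval p rf_X = rf_of_poly p"
  by (induct p) (simp_all add: rf_of_poly_pCons)
lemma rf_eval_as_sum: "degree p \<le> K \<Longrightarrow> rf_eval p z = (\<Sum>i\<le>K. rf_const (Polynomial.coeff p i) * z ^ i)"
  using rf_eval_sum[of "\<lambda>i. Polynomial.monom (Polynomial.coeff p i) i" "{..K}" z] poly_as_sum_of_monoms'[of p K] by simp

definition Rev :: "nat \<Rightarrow> 'a::field poly \<Rightarrow> 'a poly" where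
  "Rev K p = (\<Sum>i\<le>K. Polynomial.monom (Polynomial.coeff p i) (K - i))"

lemma coeff_Rev: "Polynomial.coeff (Rev K p) j = (if j \<le> K then Polynomial.coeff p (K - j) else 0)"
proof -
  have "Polynomial.coeff (Rev K p) j = (\<Sum>i\<le>K. if K - i = j then Polynomial.coeff p i else 0)"
    by (simp add: Rev_def coeff_sum coeff_monom)
  also have "\<dots> = (\<Sum>i\<le>K. if i = K - j \<and> j \<le> K then Polynomial.coeff p i else 0)"
    by (rule sum.cong) auto
  also have "\<dots> = (if j \<le> K then Polynomial.coeff p (K - j) else 0)"
    by (cases "j \<le> K") simp_all
  finally show ?thesis .
qed

lemma rf_eval_Y_Rev: 
  assumes "degree p \<le> K"
  shows "rf_eval p Y * rf_X ^ K = rf_of_poly (Rev K p)"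
proof -
  have "rf_eval p Y * rf_X ^ K = (\<Sum>i\<le>K. rf_const (Polynomial.coeff p i) * Y ^ i * rf_X ^ K)"
    by (simp add: rf_eval_as_sum[OF assms] sum_distrib_right)
  also have "\<dots> = (\<Sum>i\<le>K. rf_const (Polynomial.coeff p i) * rf_X ^ (K - i))"
  proof (rule sum.cong)
    fix i assume "i \<in> {..K}"
    then have "rf_X ^ K = rf_X ^ i * (rf_X :: 'a rf) ^ (K - i)" by (simp add: power_add[symmetric])
    then show "rf_const (Polynomial.coeff p i) * Y ^ i * rf_X ^ K = rf_const (Polynomial.coeff p i) * rf_X ^ (K - i)"
      by (simp add: power_inverse field_simps)
  qed simp
  also have "\<dots> = rf_of_poly (Rev K p)"
    by (simp add: Rev_def rf_of_poly_monom rf_of_poly_sum)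
  finally show ?thesis .
qed

lemma rf_eval_Y_nz:
  assumes "q \<noteq> 0" shows "rf_eval q (Y :: 'a::field rf) \<noteq> 0"
proof
  assume "rf_eval q (Y :: 'a rf) = 0"
  then have "rf_of_poly (Rev (degree q) q) = 0" using rf_eval_Y_Rev[of q "degree q"] by simp
  then have "Rev (degree q) q = 0" by simp
  then have "Polynomial.coeff (Rev (degree q) q) 0 = 0" by simp
  then show False using assms by (simp add: coeff_Rev)
qed

abbreviation sig :: "'a::field rf \<Rightarrow> 'a rf" where "sig \<equiv> rf_inv_subst"

lemma sig_Fract:
  assumes "q \<noteq> 0" shows "sig (Fract p q) = rf_eval p Y / rf_eval q Y"
  unfolding rf_inv_subst_def
proof (rule someI2[where a = "rf_eval p Y / rf_eval q Y"])
  show "\<exists>pa qa. qa \<noteq> 0 \<and> Fract p q = Fract pa qa \<and> rf_eval p Y / rf_eval q Y = rf_eval pa Y / rf_eval qa Y"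
    using assms by blast
next
  fix s assume "\<exists>pa qa. qa \<noteq> 0 \<and> Fract p q = Fract pa qa \<and> s = rf_eval pa Y / rf_eval qa Y"
  then obtain p' q' where h: "q' \<noteq> 0" "Fract p q = Fract p' q'" "s = rf_eval p' Y / rf_eval q' Y" by blast
  then have "p * q' = p' * q" using assms by (simp add: eq_fract)
  then have "rf_eval p Y * rf_eval q' Y = rf_eval p' Y * rf_eval q Y"
    by (metis rf_eval_mult)
  then show "s = rf_eval p Y / rf_eval q Y" using h(1,3) assms rf_eval_Y_nz[of q] rf_eval_Y_nz[of q']
    by (simp add: frac_eq_eq)
qed

lemma sig_poly[simp]: "sig (rf_of_poly p) = rf_eval p Y"
  using sig_Fract[of 1 p] by (simp add: rf_of_poly_def)
lemma sig_const[simp]: "sig (rf_const a) = rf_const a"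
  using sig_poly[of "[:a:]"] by simp
lemma sig_0[simp]: "sig 0 = 0" using sig_const[of 0] by simp
lemma sig_1[simp]: "sig 1 = 1" using sig_const[of 1] by simp
lemma sig_X[simp]: "sig rf_X = Y" using sig_poly[of "[:0,1:]"] by (simp add: rf_of_poly_X)

lemma sig_add[simp]: "sig (r + s) = sig r + sig s"
proof (cases r; cases s)
  fix a b c d assume h: "r = Fract a b" "b \<noteq> 0" "s = Fract c d" "d \<noteq> 0"
  then show ?thesis using rf_eval_Y_nz[of b] rf_eval_Y_nz[of d]
    by (simp add: sig_Fract field_simps)
qed
lemma sig_mult[simp]: "sig (r * s) = sig r * sig s"
proof (cases r; cases s)
  fix a b c d assume h: "r = Fract a b" "b \<noteq> 0" "s = Fract c d" "d \<noteq> 0"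
  then show ?thesis using rf_eval_Y_nz[of b] rf_eval_Y_nz[of d]
    by (simp add: sig_Fract field_simps)
qed
lemma sig_uminus[simp]: "sig (- r) = - sig r"
  by (metis add.right_inverse add_eq_0_iff sig_add sig_0)
lemma sig_diff[simp]: "sig (r - s) = sig r - sig s"
  by (metis diff_conv_add_uminus sig_add sig_uminus)
lemma sig_inverse[simp]: "sig (inverse r) = inverse (sig r)"
proof (cases r)
  fix a b assume h: "r = Fract a b" "b \<noteq> 0"
  show ?thesis
  proof (cases "a = 0")
    case True then show ?thesis using h by (simp add: fract_collapse)
  next
    case False then show ?thesis using h rf_eval_Y_nz[of b] rf_eval_Y_nz[of a]
      by (simp add: sig_Fract)
  qed
qed
lemma sig_divide[simp]: "sig (r / s) = sig r / sig s"
  by (simp add: divide_inverse)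
lemma sig_power[simp]: "sig (r ^ n) = sig r ^ n" by (induct n) simp_all
lemma sig_eval: "sig (rf_eval p z) = rf_eval p (sig z)" by (induct p) simp_all
lemma sig_Y[simp]: "sig Y = rf_X" by simp
lemma sig_sig[simp]: "sig (sig r) = r"
proof (cases r)
  fix a b assume h: "r = Fract a b" "b \<noteq> 0"
  then show ?thesis by (simp add: sig_Fract sig_eval rf_eval_at_X Fract_as_div)
qed
lemma sig_eq_0_iff[simp]: "sig r = 0 \<longleftrightarrow> r = 0"
  by (metis sig_0 sig_sig)
lemma sig_of_nat[simp]: "sig (of_nat n) = of_nat n"
  using sig_const[of "of_nat n"] by simp
lemma sig_numeral[simp]: "sig (numeral n) = numeral n"
  using sig_const[of "numeral n"] by simp




abbreviation u0 :: "'a::field rf" where "u0 \<equiv> rf_X + Y"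

lemma sig_u0[simp]: "sig u0 = u0" by (simp add: add.commute)

lemma rf_U: "rf_of_poly [:1,0,1:] = rf_X * (u0 :: 'a::field rf)"
  by (simp add: rf_of_poly_pCons field_simps)

lemma Rev_deg: "degree (Rev K p) \<le> K"
  by (rule degree_le) (simp add: coeff_Rev)

lemma degX: "degree ([:0,1:]^m :: 'a::field poly) \<le> m"
  using degree_monom_le[of "1::'a" m] by (simp add: monom_altdef)

lemma pal:
  "\<forall>P::'a::field poly. degree P \<le> 2*M \<and> sig (rf_of_poly P) * rf_X^(2*M) = rf_of_poly P
     \<longrightarrow> (\<exists>Q. rf_of_poly P = rf_eval Q u0 * rf_X^M)"
proof (induction M)
  case 0
  show ?case
  proof (intro allI impI)
    fix P :: "'a poly" assume "degree P \<le> 2*0 \<and> sig (rf_of_poly P) * rf_X^(2*0) = rf_of_poly P"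
    then have "degree P = 0" by simp
    then have "P = [:Polynomial.coeff P 0:]" by (metis degree_0_id)
    then have "rf_of_poly P = rf_eval [:Polynomial.coeff P 0:] u0 * rf_X^0" by (metis rf_eval_const rf_of_poly_const mult_1_right power_0)
    then show "\<exists>Q. rf_of_poly P = rf_eval Q u0 * rf_X^0" by blast
  qed
next
  case (Suc M)
  show ?case
  proof (intro allI impI)
    fix P :: "'a poly" assume hP: "degree P \<le> 2*Suc M \<and> sig (rf_of_poly P) * rf_X^(2*Suc M) = rf_of_poly P"
    define K where "K = 2 * Suc M"
    define U :: "'a poly" where "U = [:1,0,1:]"
    define c where "c = Polynomial.coeff P K"
    define P' where "P' = P - Polynomial.smult c (U ^ Suc M)"
    have degU: "degree U = 2" by (simp add: U_def)
    have "degree (U ^ Suc M) = Suc M * degree U" by (rule degree_power_eq) (simp add: U_def)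
    then have degUp: "degree (U ^ Suc M) = K" using degU by (simp add: K_def)
    have lcU: "lead_coeff U = 1" by (simp add: U_def)
    have "lead_coeff (U ^ Suc M) = 1" by (simp only: lead_coeff_power lcU power_one)
    then have lcUp: "Polynomial.coeff (U ^ Suc M) K = 1" using degUp by simp
    have sigU: "sig (rf_of_poly U) = Y * u0" by (simp add: U_def rf_U)
    have symU: "sig (rf_of_poly (U ^ Suc M)) * rf_X ^ K = rf_of_poly (U ^ Suc M)"
    proof -
      have a: "sig (rf_of_poly (U ^ Suc M)) = (Y*u0)^Suc M" by (simp only: rf_of_poly_power sig_power sigU)
      have b: "rf_X ^ K = (rf_X * rf_X)^Suc M" by (simp add: K_def power_mult_distrib mult_2 power_add)
      have c: "Y * u0 * (rf_X * rf_X) = rf_X * (u0::'a rf)" by (simp add: field_simps)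
      have "sig (rf_of_poly (U ^ Suc M)) * rf_X ^ K = (rf_X * u0) ^ Suc M"
        unfolding a b power_mult_distrib[symmetric] c by simp
      also have "\<dots> = rf_of_poly (U ^ Suc M)" by (simp only: U_def rf_of_poly_power rf_U)
      finally show ?thesis .
    qed
    have symP': "sig (rf_of_poly P') * rf_X ^ K = rf_of_poly P'"
      using hP symU unfolding P'_def K_def by (simp add: algebra_simps)
    have degP': "degree P' \<le> K" unfolding P'_def using hP degUp
      by (metis K_def degree_diff_le degree_smult_le le_trans)
    have cK: "Polynomial.coeff P' K = 0" unfolding P'_def coeff_diff coeff_smult lcUp c_def by simp
    have "rf_of_poly (Rev K P') = rf_of_poly P'" using rf_eval_Y_Rev[OF degP'] symP' by simp
    then have "Rev K P' = P'" by simp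
    then have c0: "Polynomial.coeff P' 0 = 0" using cK coeff_Rev[of K P' 0] by simp
    then have "[:0,1:] dvd P'" using dvd_iff_poly_eq_0[of 0 P'] by (simp add: poly_0_coeff_0)
    then obtain P'' where P'': "P' = [:0,1:] * P''" by blast
    have degP'': "degree P'' \<le> 2 * M"
    proof (cases "P'' = 0")
      case False
      have "degree P' \<le> K - 1"
      proof (rule degree_le, intro allI impI)
        fix i assume "K - 1 < i"
        then have "i = K \<or> i > K" using K_def by linarith
        then show "Polynomial.coeff P' i = 0" using cK degP' by (metis coeff_eq_0 order.strict_trans1)
      qed
      moreover have "degree P' = degree P'' + 1" using False P'' by (simp add: degree_mult_eq)
      ultimately show ?thesis by (simp add: K_def)
    qed simp
    have rP': "rf_of_poly P' = rf_X * rf_of_poly P''" using P'' by (simp add: rf_of_poly_pCons)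
    have "Y * sig (rf_of_poly P'') * rf_X ^ K = rf_X * rf_of_poly P''"
      using symP' rP' by simp
    then have "Y * sig (rf_of_poly P'') * (rf_X * rf_X * rf_X ^ (2*M)) = rf_X * rf_of_poly P''"
      by (simp add: K_def power_add[symmetric] mult.commute)
    then have symP'': "sig (rf_of_poly P'') * rf_X ^ (2*M) = rf_of_poly P''"
      by (simp add: field_simps)
    obtain Q where Q: "rf_of_poly P'' = rf_eval Q u0 * rf_X^M"
      using Suc.IH degP'' symP'' by blast
    have "P = P' + Polynomial.smult c (U ^ Suc M)" by (simp add: P'_def)
    then have "rf_of_poly P = rf_of_poly P' + rf_const c * rf_of_poly (U ^ Suc M)"
      by (simp only: rf_of_poly_add rf_of_poly_smult)
    also have "rf_of_poly (U ^ Suc M) = (rf_X * u0) ^ Suc M" by (simp only: U_def rf_of_poly_power rf_U)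
    finally have "rf_of_poly P = rf_X * (rf_eval Q u0 * rf_X^M) + rf_const c * (rf_X * u0) ^ Suc M"
      using rP' Q by simp
    also have "\<dots> = rf_eval (Q + Polynomial.monom c (Suc M)) u0 * rf_X ^ Suc M"
    proof -
      have gen: "\<And>(a::'a rf) b x k. x*(a*x^M) + k*(x*b)^Suc M = (a + k*b^Suc M)*x^Suc M"
        by (simp add: algebra_simps power_mult_distrib)
      show ?thesis by (simp only: rf_eval_add rf_eval_monom gen)
    qed
    finally show "\<exists>Q. rf_of_poly P = rf_eval Q u0 * rf_X ^ Suc M" by blast
  qed
qed

lemma pal':
  fixes z :: "'a::field rf"
  assumes "z * rf_X^M = rf_of_poly P" "degree P \<le> 2*M" "sig z = z"
  shows "\<exists>Q. z = rf_eval Q u0"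
proof -
  have e1: "sig (rf_of_poly P) = z * Y^M"
    using assms(1)[symmetric] assms(3) by (simp add: power_inverse)
  have e2: "rf_X^(2*M) = rf_X^M * (rf_X^M :: 'a rf)" by (simp add: power_add[symmetric] mult_2)
  have e3: "Y^M * rf_X^M = (1::'a rf)" by (simp add: power_mult_distrib[symmetric])
  have "sig (rf_of_poly P) * rf_X^(2*M) = z * rf_X^M * (Y^M * rf_X^M)"
    unfolding e1 e2 by (simp add: algebra_simps)
  also have "\<dots> = rf_of_poly P" using assms(1) e3 by simp
  finally obtain Q where "rf_of_poly P = rf_eval Q u0 * rf_X^M" using pal[of M] assms(2) by blast
  then have "z * rf_X^M = rf_eval Q u0 * rf_X^M" using assms(1) by simp
  then show ?thesis by auto
qed

lemma sym_rat:
  fixes r :: "'a::field rf"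
  assumes "sig r = r"
  shows "\<exists>P Q. rf_eval Q u0 \<noteq> 0 \<and> r = rf_eval P u0 / rf_eval Q u0"
proof (cases r)
  fix p q assume hr: "r = Fract p q" "q \<noteq> 0"
  define m where "m = degree p"
  define n where "n = degree q"
  define M where "M = m + n"
  define D where "D = rf_of_poly q * sig (rf_of_poly q)"
  define N where "N = rf_of_poly p * sig (rf_of_poly q)"
  have Dnz: "D \<noteq> 0" using hr(2) rf_eval_Y_nz[of q] by (simp add: D_def)
  have rD: "r = N / D" using hr Dnz by (simp add: D_def N_def Fract_as_div)
  have Rq: "sig (rf_of_poly q) * rf_X ^ n = rf_of_poly (Rev n q)"
    using rf_eval_Y_Rev[of q n] by (simp add: n_def)
  have dRev: "degree (Rev n q) \<le> n" by (rule Rev_deg)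
  have "D * rf_X ^ M = rf_of_poly (q * Rev n q * [:0,1:]^m)"
    using Rq by (simp add: D_def M_def power_add rf_of_poly_X algebra_simps)
  moreover have "degree (q * Rev n q * [:0,1:]^m) \<le> 2*M"
  proof -
    have "degree (q * Rev n q * [:0,1:]^m) \<le> degree q + degree (Rev n q) + degree ([:0,1:]^m :: 'a poly)"
      by (meson add_le_mono degree_mult_le le_trans order_refl)
    also have "\<dots> \<le> n + n + m" using dRev degX[where 'a='a, of m] unfolding n_def by linarith
    finally show ?thesis by (simp add: M_def)
  qed
  moreover have "sig D = D" by (simp add: D_def mult.commute sig_eval rf_eval_at_X)
  ultimately obtain QD where QD: "D = rf_eval QD u0" using pal' by blast
  have "N * rf_X ^ M = rf_of_poly (p * Rev n q * [:0,1:]^m)"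
    using Rq by (simp add: N_def M_def power_add rf_of_poly_X algebra_simps)
  moreover have "degree (p * Rev n q * [:0,1:]^m) \<le> 2*M"
  proof -
    have "degree (p * Rev n q * [:0,1:]^m) \<le> degree p + degree (Rev n q) + degree ([:0,1:]^m :: 'a poly)"
      by (meson add_le_mono degree_mult_le le_trans order_refl)
    also have "\<dots> \<le> m + n + m" using dRev degX[where 'a='a, of m] unfolding m_def n_def by linarith
    finally show ?thesis by (simp add: M_def)
  qed
  moreover have "sig N = N"
  proof -
    have "N = r * D" using rD Dnz by simp
    then show ?thesis using assms by (simp add: D_def mult.commute sig_eval rf_eval_at_X)
  qed
  ultimately obtain QN where QN: "N = rf_eval QN u0" using pal' by blast
  show ?thesis using rD QD QN Dnz by blast
qed




lemma FF_carrier[simp]: "carrier (FF f) = UNIV" by (simp add: FF_def)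
lemma FF_mult: "x \<otimes>\<^bsub>FF f\<^esub> y = (fst x * fst y + snd x * snd y * rf_of_poly f, fst x * snd y + snd x * fst y)"
  by (simp add: FF_def split_def)
lemma FF_add: "x \<oplus>\<^bsub>FF f\<^esub> y = (fst x + fst y, snd x + snd y)"
  by (simp add: FF_def split_def)
lemma FF_one: "\<one>\<^bsub>FF f\<^esub> = (1, 0)" by (simp add: FF_def)
lemma FF_zero: "\<zero>\<^bsub>FF f\<^esub> = (0, 0)" by (simp add: FF_def)

lemma FF_ainv: "\<ominus>\<^bsub>FF f\<^esub> x = (- fst x, - snd x)"
  unfolding a_inv_def m_inv_def
  by (rule the_equality) (auto simp: FF_def split_def eq_neg_iff_add_eq_0 add.commute)

lemma norm_nz:
  fixes f :: "'a::field poly"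
  assumes nonsq: "\<And>r. r * r \<noteq> rf_of_poly f" and nz: "(a, b) \<noteq> ((0::'a rf), (0::'a rf))"
  shows "a * a - b * b * rf_of_poly f \<noteq> 0"
proof
  assume h: "a * a - b * b * rf_of_poly f = 0"
  show False
  proof (cases "b = 0")
    case True then show False using h nz by simp
  next
    case False
    then have "(a / b) * (a / b) = rf_of_poly f" using h by (simp add: field_simps)
    then show False using nonsq by blast
  qed
qed

lemma FF_minv:
  fixes f :: "'a::field poly"
  assumes nonsq: "\<And>r. r * r \<noteq> rf_of_poly f" and nz: "x \<noteq> \<zero>\<^bsub>FF f\<^esub>"
  shows "inv\<^bsub>FF f\<^esub> x = (fst x / (fst x * fst x - snd x * snd x * rf_of_poly f),
                        - snd x / (fst x * fst x - snd x * snd x * rf_of_poly f))"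
proof -
  obtain a b where x: "x = (a, b)" by fastforce
  define N where "N = a * a - b * b * rf_of_poly f"
  have N: "N \<noteq> 0" using norm_nz[OF nonsq, of a b] nz x by (simp add: N_def FF_zero)
  have "inv\<^bsub>FF f\<^esub> (a, b) = (a / N, - b / N)"
    unfolding m_inv_def
  proof (rule the_equality)
    show "(a / N, - b / N) \<in> carrier (FF f) \<and> (a, b) \<otimes>\<^bsub>FF f\<^esub> (a / N, - b / N) = \<one>\<^bsub>FF f\<^esub> \<and>
          (a / N, - b / N) \<otimes>\<^bsub>FF f\<^esub> (a, b) = \<one>\<^bsub>FF f\<^esub>"
    proof -
      have i0: "(a*a - b*b*rf_of_poly f)/N = 1" using N by (simp add: N_def)
      have i1: "a*(a/N) + b*(-b/N)*rf_of_poly f = 1" using N i0 by (simp add: field_simps)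
      have i2: "a*(-b/N) + b*(a/N) = 0" using N by (simp add: field_simps)
      have i3: "(a/N)*a + (-b/N)*b*rf_of_poly f = 1" using i1 by (simp add: algebra_simps)
      have i4: "(a/N)*b + (-b/N)*a = 0" using i2 by (simp add: algebra_simps)
      show ?thesis by (simp only: FF_mult FF_one fst_conv snd_conv i1 i2 i3 i4 FF_carrier) simp
    qed
  next
    fix y assume "y \<in> carrier (FF f) \<and> (a, b) \<otimes>\<^bsub>FF f\<^esub> y = \<one>\<^bsub>FF f\<^esub> \<and> y \<otimes>\<^bsub>FF f\<^esub> (a, b) = \<one>\<^bsub>FF f\<^esub>"
    then have e1: "a * fst y + b * snd y * rf_of_poly f = 1" and e2: "a * snd y + b * fst y = 0"
      by (auto simp: FF_mult FF_one)
    have "N * fst y = a"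
    proof -
      have "N * fst y = a * (a * fst y + b * snd y * rf_of_poly f) - b * rf_of_poly f * (a * snd y + b * fst y)"
        by (simp add: N_def algebra_simps)
      then show ?thesis using e1 e2 by simp
    qed
    moreover have "N * snd y = - b"
    proof -
      have "N * snd y = a * (a * snd y + b * fst y) - b * (a * fst y + b * snd y * rf_of_poly f)"
        by (simp add: N_def algebra_simps)
      then show ?thesis using e1 e2 by simp
    qed
    ultimately show "y = (a / N, - b / N)" using N
      by (metis nonzero_mult_div_cancel_left prod.collapse)
  qed
  then show ?thesis using x by (simp add: N_def)
qed

lemma FF_const_simp: "FF_const a = (rf_const a, 0)" by (simp add: FF_const_def)

lemma FF_eval_u:
  "FF_eval f p (r, 0) = (rf_eval p r, 0)"
proof (induction p)
  case 0 then show ?case by (simp add: FF_eval_def FF_zero)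
next
  case (pCons a p)
  define F where "F = (\<lambda>a acc. FF_const a \<oplus>\<^bsub>FF f\<^esub> ((r, 0) \<otimes>\<^bsub>FF f\<^esub> acc))"
  have eq: "FF_eval f q (r, 0) = fold_coeffs F q \<zero>\<^bsub>FF f\<^esub>" for q
    by (simp add: FF_eval_def F_def fold_coeffs_def)
  show ?case
  proof (cases "a = 0 \<and> p = 0")
    case True then show ?thesis by (simp add: FF_eval_def FF_zero)
  next
    case False
    then have "fold_coeffs F (pCons a p) = F a \<circ> fold_coeffs F p" by auto
    then have "FF_eval f (pCons a p) (r, 0) = F a (FF_eval f p (r, 0))" by (simp add: eq)
    then show ?thesis using pCons.IH by (simp add: F_def FF_const_simp FF_add FF_mult)
  qed
qed

lemma ev_u0_nz:
  fixes p :: "'a::field poly"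
  assumes "p \<noteq> 0" shows "rf_eval p u0 \<noteq> 0"
proof -
  have "p \<noteq> 0 \<longrightarrow> (\<exists>T. T \<noteq> 0 \<and> degree T = 2 * degree p \<and> rf_X ^ degree p * rf_eval p u0 = rf_of_poly T)"
  proof (induction p)
    case 0 then show ?case by simp
  next
    case (pCons a p)
    show ?case
    proof (cases "p = 0")
      case True
      then show ?thesis by (auto intro!: exI[of _ "[:a:]"])
    next
      case False
      then obtain T where T: "T \<noteq> 0" "degree T = 2 * degree p" "rf_X ^ degree p * rf_eval p u0 = rf_of_poly T"
        using pCons.IH by blast
      define U :: "'a poly" where "U = [:1,0,1:]"
      have rU: "rf_of_poly U = rf_X * u0" unfolding U_def by (rule rf_U)
      have "degree (U * T) = degree U + degree T" using T(1) by (intro degree_mult_eq) (simp_all add: U_def)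
      moreover have "degree U = 2" by (simp add: U_def)
      ultimately have d1: "degree (U * T) = 2 * degree p + 2" using T by simp
      define T' where "T' = Polynomial.monom a (Suc (degree p)) + U * T"
      have d2: "degree (Polynomial.monom a (Suc (degree p))) < degree (U * T)"
        using d1 degree_monom_le[of a "Suc (degree p)"] by linarith
      have dT': "degree T' = 2 * degree p + 2"
        unfolding T'_def using d1 d2 by (simp add: degree_add_eq_right)
      have "rf_X ^ degree (pCons a p) * rf_eval (pCons a p) u0 = rf_of_poly T'"
      proof -
        have "rf_X ^ degree (pCons a p) * rf_eval (pCons a p) u0
              = rf_const a * rf_X ^ Suc (degree p) + (rf_X * u0) * (rf_X ^ degree p * rf_eval p u0)"
          using False by (simp add: algebra_simps)
        also have "\<dots> = rf_of_poly T'" using T(3) by (simp add: T'_def rf_of_poly_monom rU)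
        finally show ?thesis .
      qed
      moreover have "T' \<noteq> 0" using dT' by auto
      ultimately show ?thesis using dT' False by auto
    qed
  qed
  then obtain T where "T \<noteq> 0" "rf_X ^ degree p * rf_eval p u0 = rf_of_poly T" using assms by blast
  then show ?thesis by auto
qed




lemma gen_poly:
  assumes "range FF_const \<subseteq> S" "(u0, 0) \<in> S"
  shows "(rf_eval P u0, 0) \<in> generate_field (FF f) S"
proof (induction P)
  case 0
  have "FF_const 0 \<in> S" using assms(1) by blast
  then show ?case by (simp add: FF_const_simp generate_field.incl)
next
  case (pCons a P)
  have c: "FF_const a \<in> generate_field (FF f) S" using assms(1) by (blast intro: generate_field.incl)
  have u: "(u0, 0) \<in> generate_field (FF f) S" using assms(2) by (blast intro: generate_field.incl)
  have "FF_const a \<oplus>\<^bsub>FF f\<^esub> ((u0, 0) \<otimes>\<^bsub>FF f\<^esub> (rf_eval P u0, 0)) \<in> generate_field (FF f) S"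
    using c u pCons.IH by (intro generate_field.eng_add generate_field.eng_mult)
  moreover have "FF_const a \<oplus>\<^bsub>FF f\<^esub> ((u0, 0) \<otimes>\<^bsub>FF f\<^esub> (rf_eval P u0, 0)) = (rf_eval (pCons a P) u0, 0)"
    by (simp add: FF_const_simp FF_add FF_mult)
  ultimately show ?case by simp
qed

lemma gen_sym:
  fixes f :: "'a::field poly"
  assumes nonsq: "\<And>r. r * r \<noteq> rf_of_poly f"
    and "range FF_const \<subseteq> S" "(u0, 0) \<in> S" and "sig r = r"
  shows "(r, 0) \<in> generate_field (FF f) S"
proof -
  obtain P Q where PQ: "rf_eval Q u0 \<noteq> 0" "r = rf_eval P u0 / rf_eval Q u0" using sym_rat[OF assms(4)] by blast
  let ?q = "rf_eval Q u0" and ?p = "rf_eval P u0"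
  have gq: "(?q, 0) \<in> generate_field (FF f) S" by (rule gen_poly[OF assms(2,3)])
  have gp: "(?p, 0) \<in> generate_field (FF f) S" by (rule gen_poly[OF assms(2,3)])
  have nz: "(?q, 0) \<noteq> \<zero>\<^bsub>FF f\<^esub>" using PQ by (simp add: FF_zero)
  have inv: "inv\<^bsub>FF f\<^esub> (?q, 0) = (inverse ?q, 0)"
    using FF_minv[OF nonsq nz] PQ(1) by (simp add: field_simps)
  have "(?p, 0) \<otimes>\<^bsub>FF f\<^esub> inv\<^bsub>FF f\<^esub> (?q, 0) \<in> generate_field (FF f) S"
    using gp gq nz by (intro generate_field.eng_mult generate_field.m_inv)
  moreover have "(?p, 0) \<otimes>\<^bsub>FF f\<^esub> inv\<^bsub>FF f\<^esub> (?q, 0) = (r, 0)"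
    unfolding inv using PQ by (simp add: FF_mult divide_inverse)
  ultimately show ?thesis by simp
qed

lemma main:
  fixes f :: "'a::field poly" and k w :: "'a rf" and h :: "'a poly"
  assumes nonsq: "\<And>r. r * r \<noteq> rf_of_poly f"
    and k1: "k * sig k = 1" and k2: "k * k * rf_of_poly f = sig (rf_of_poly f)"
    and w1: "w \<noteq> 0" and w2: "k * sig w = w"
    and hh: "rf_eval h u0 = w * w * rf_of_poly f"
    and tau: "\<tau> = (\<lambda>(a, b). (sig a, k * sig b))"
  shows "quotient_given_by f \<tau> h"
proof -
  define F where "F = rf_of_poly f"
  define u :: "'a rf \<times> 'a rf" where "u = (u0, 0)"
  define v :: "'a rf \<times> 'a rf" where "v = (0, w)"
  have fixed_iff: "z \<in> fixed_field \<tau> \<longleftrightarrow> sig (fst z) = fst z \<and> k * sig (snd z) = snd z" for z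
    by (cases z) (simp add: fixed_field_def tau)
  have sigb: "k * sig b = b \<Longrightarrow> sig b = sig k * b" for b
    by (metis k1 mult.assoc mult.commute mult_1_left)
  have sF: "sig F = k * k * F" using k2 by (simp add: F_def)
  have uf: "u \<in> fixed_field \<tau>" by (simp add: fixed_iff u_def)
  have vf: "v \<in> fixed_field \<tau>" using w2 by (simp add: fixed_iff v_def)
  have tr: "FF_transcendental f u"
    unfolding FF_transcendental_def u_def using ev_u0_nz[where 'a='a] by (simp add: FF_eval_u FF_zero)
  have vnot: "v \<notin> FF_gen f {u}"
  proof -
    have "z \<in> generate_field (FF f) (range FF_const \<union> {u}) \<Longrightarrow> snd z = 0" for z
    proof (induction rule: generate_field.induct)
      case one then show ?case by (simp add: FF_one)
    next
      case (incl h) then show ?case by (auto simp: FF_const_simp u_def)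
    next
      case (a_inv h) then show ?case by (simp add: FF_ainv)
    next
      case (m_inv h) then show ?case by (simp add: FF_minv[OF nonsq])
    next
      case (eng_add h1 h2) then show ?case by (simp add: FF_add)
    next
      case (eng_mult h1 h2) then show ?case by (simp add: FF_mult)
    qed
    then show ?thesis using w1 by (auto simp: FF_gen_def v_def)
  qed
  have vv: "v \<otimes>\<^bsub>FF f\<^esub> v = FF_eval f h u"
    by (simp add: v_def u_def FF_mult FF_eval_u hh)
  have sub: "FF_gen f {u, v} \<subseteq> fixed_field \<tau>"
  proof
    fix z assume "z \<in> FF_gen f {u, v}"
    then have "z \<in> generate_field (FF f) (range FF_const \<union> {u, v})" by (simp add: FF_gen_def)
    then show "z \<in> fixed_field \<tau>"
    proof (induction rule: generate_field.induct)
      case one then show ?case by (simp add: FF_one fixed_iff)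
    next
      case (incl h) then show ?case using uf vf by (auto simp: FF_const_simp fixed_iff)
    next
      case (a_inv h) then show ?case by (simp add: FF_ainv fixed_iff)
    next
      case (m_inv h)
      obtain a b where hab: "h = (a, b)" by fastforce
      have fa: "sig a = a" and fb: "k * sig b = b" using m_inv.IH hab by (auto simp: fixed_iff)
      define N where "N = a * a - b * b * F"
      have sN: "sig N = N"
      proof -
        have "sig N = a * a - (sig k * b) * (sig k * b) * (k * k * F)"
          using fa sigb[OF fb] sF by (simp add: N_def)
        also have "\<dots> = a * a - (k * sig k) * (k * sig k) * b * b * F" by (simp add: algebra_simps)
        finally show ?thesis using k1 by (simp add: N_def)
      qed
      have "inv\<^bsub>FF f\<^esub> h = (a / N, - b / N)" using FF_minv[OF nonsq m_inv.hyps(2)] hab by (simp add: N_def F_def)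
      moreover have "sig (a / N) = a / N" using fa sN by simp
      moreover have "k * sig (- b / N) = - b / N" using fb sN by (simp add: algebra_simps)
      ultimately show ?case by (simp add: fixed_iff)
    next
      case (eng_add h1 h2) then show ?case by (simp add: FF_add fixed_iff algebra_simps)
    next
      case (eng_mult h1 h2)
      obtain a b where h1: "h1 = (a, b)" by fastforce
      obtain c d where h2: "h2 = (c, d)" by fastforce
      have fa: "sig a = a" and fb: "k * sig b = b" using eng_mult h1 by (auto simp: fixed_iff)
      have fc: "sig c = c" and fd: "k * sig d = d" using eng_mult h2 by (auto simp: fixed_iff)
      have e1: "sig (a * c + b * d * F) = a * c + b * d * F"
      proof -
        have "sig (a * c + b * d * F) = a * c + (sig k * b) * (sig k * d) * (k * k * F)"
          using fa fc sigb[OF fb] sigb[OF fd] sF by simp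
        also have "\<dots> = a * c + (k * sig k) * (k * sig k) * b * d * F" by (simp add: algebra_simps)
        finally show ?thesis using k1 by simp
      qed
      have e2: "k * sig (a * d + b * c) = a * d + b * c"
      proof -
        have "k * sig (a * d + b * c) = a * (k * sig d) + (k * sig b) * c" using fa fc by (simp add: algebra_simps)
        then show ?thesis using fb fd by simp
      qed
      show ?case using e1 e2 h1 h2 by (simp add: FF_mult fixed_iff F_def)
    qed
  qed
  have sup: "fixed_field \<tau> \<subseteq> FF_gen f {u, v}"
  proof
    fix z assume zf: "z \<in> fixed_field \<tau>"
    obtain a b where z: "z = (a, b)" by fastforce
    have fa: "sig a = a" and fb: "k * sig b = b" using zf z by (auto simp: fixed_iff)
    let ?S = "range FF_const \<union> {u, v}"
    have S1: "range FF_const \<subseteq> ?S" and S2: "(u0, 0) \<in> ?S" by (auto simp: u_def)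
    have ga: "(a, 0) \<in> generate_field (FF f) ?S" by (rule gen_sym[OF nonsq S1 S2 fa])
    have sw: "sig w = sig k * w" by (rule sigb[OF w2])
    have skn: "sig k \<noteq> 0" using k1 by auto
    have "sig (b / w) = b / w" using sigb[OF fb] sw skn by simp
    then have gt: "(b / w, 0) \<in> generate_field (FF f) ?S" by (rule gen_sym[OF nonsq S1 S2])
    have gv: "v \<in> generate_field (FF f) ?S" by (blast intro: generate_field.incl)
    have "(a, 0) \<oplus>\<^bsub>FF f\<^esub> ((b / w, 0) \<otimes>\<^bsub>FF f\<^esub> v) \<in> generate_field (FF f) ?S"
      using ga gt gv by (intro generate_field.eng_add generate_field.eng_mult)
    moreover have "(a, 0) \<oplus>\<^bsub>FF f\<^esub> ((b / w, 0) \<otimes>\<^bsub>FF f\<^esub> v) = z"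
      using w1 z by (simp add: FF_add FF_mult v_def)
    ultimately show "z \<in> FF_gen f {u, v}" by (simp add: FF_gen_def)
  qed
  show ?thesis unfolding quotient_given_by_def
    using uf vf tr vnot vv sub sup by blast
qed




lemma rf_eval_dickson: "rf_eval (dickson m 1) z = E m z"
proof -
  have "rf_eval (dickson m 1) z = poly (dickson m 1) z"
    by (simp add: dickson_def rf_eval_sum poly_sum poly_monom)
  then show ?thesis by (simp add: poly_dickson)
qed

lemma degree_Cpoly: 
  assumes "g \<ge> 1" shows "degree (Cpoly g (c::'a::field)) = 2 * g + 1"
proof (rule antisym)
  show "degree (Cpoly g c) \<le> 2 * g + 1"
    by (rule degree_le) (auto simp: Cpoly_def coeff_monom)
  show "2 * g + 1 \<le> degree (Cpoly g c)"
    by (rule le_degree) (use assms in \<open>simp add: Cpoly_def coeff_monom\<close>)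
qed

lemma nonsq_odd:
  fixes f :: "'a::field poly"
  assumes "odd (degree f)"
  shows "r * r \<noteq> rf_of_poly f"
proof
  assume h: "r * r = rf_of_poly f"
  obtain p q where r: "r = Fract p q" "q \<noteq> 0" by (cases r) auto
  have "Fract (p * p) (q * q) = Fract f 1" using h r by (simp add: rf_of_poly_def)
  then have e: "p * p = f * (q * q)" using r(2) by (simp add: eq_fract)
  have f0: "f \<noteq> 0" using assms by auto
  then have p0: "p \<noteq> 0" using e r(2) by auto
  have "degree (p * p) = degree (f * (q * q))" using e by simp
  then have "degree p + degree p = degree f + (degree q + degree q)"
    using p0 f0 r(2) by (simp add: degree_mult_eq)
  then show False using assms by presburger
qed

lemma hD_gen:
  assumes "g \<ge> 1"
  shows "rf_eval (dickson1 g + [:c:]) (u0 :: 'a::field rf) = rf_X^g + inverse (rf_X^g) + rf_const c"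
  using E_inv[of "rf_X :: 'a rf" g] assms by (simp add: rf_eval_dickson power_inverse)

lemma hF_gen: "rf_of_poly (Cpoly g c) = rf_X^(2*g+1) + rf_const c * rf_X^(g+1) + rf_X"
  by (simp only: Cpoly_def rf_of_poly_add rf_of_poly_monom rf_const_1 mult_1_left power_one_right)

lemma case_odd:
  fixes c :: "'a::field"
  assumes gm: "g + 1 = 2*m" and g1: "g \<ge> 1"
  shows "quotient_given_by (Cpoly g c) (act_s g) (dickson1 g + [:c:])
       \<and> quotient_given_by (Cpoly g c) (act_s_omega g) ([:-4, 0, 1:] * (dickson1 g + [:c:]))"
proof -
  define t :: "'a rf" where "t = rf_X ^ m"
  have x0: "(rf_X :: 'a rf) \<noteq> 0" by simp
  have t0: "t \<noteq> 0" by (simp add: t_def)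
  have st: "sig t = inverse t" by (simp add: t_def power_inverse)
  have pg1: "rf_X^(g+1) = t*t" unfolding gm t_def by (simp add: mult_2 power_add)
  have "rf_X * rf_X^g = t*t" using pg1 by simp
  then have pg: "rf_X^g = t*t/rf_X" using x0 by (simp add: field_simps)
  have "rf_X^(2*g+1) = rf_X^(g+1) * (rf_X :: 'a rf)^g" by (simp add: power_add[symmetric] mult_2)
  then have p2g1: "rf_X^(2*g+1) = t*t*t*t/rf_X" using pg1 pg by simp
  have hF: "rf_of_poly (Cpoly g c) = t*t*t*t/rf_X + rf_const c * (t*t) + rf_X"
    unfolding hF_gen p2g1 pg1 ..
  have hD: "rf_eval (dickson1 g + [:c:]) (u0 :: 'a rf) = t*t/rf_X + rf_X/(t*t) + rf_const c"
    unfolding hD_gen[OF g1] pg using x0 t0 by simp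
  have nonsq: "\<And>r. r * r \<noteq> rf_of_poly (Cpoly g c)"
    by (rule nonsq_odd) (simp add: degree_Cpoly[OF g1])
  have sF: "sig (rf_of_poly (Cpoly g c)) = inverse t * inverse t * inverse t * inverse t * rf_X + rf_const c * (inverse t * inverse t) + inverse rf_X"
    unfolding hF by (simp add: st divide_inverse)
  have q1: "quotient_given_by (Cpoly g c) (act_s g) (dickson1 g + [:c:])"
  proof (rule main[OF nonsq, where k = "inverse (t*t)" and w = "inverse t"])
    show "inverse (t * t) * sig (inverse (t * t)) = 1" using t0 by (simp add: st field_simps)
    show "inverse (t * t) * inverse (t * t) * rf_of_poly (Cpoly g c) = sig (rf_of_poly (Cpoly g c))"
      unfolding sF hF using x0 t0 by (simp add: st field_simps)
    show "inverse t \<noteq> 0" using t0 by simp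
    show "inverse (t * t) * sig (inverse t) = inverse t" using t0 by (simp add: st)
    show "rf_eval (dickson1 g + [:c:]) u0 = inverse t * inverse t * rf_of_poly (Cpoly g c)"
      unfolding hD hF using x0 t0 by (simp add: st field_simps)
    show "act_s g = (\<lambda>(a, b). (sig a, inverse (t * t) * sig b))"
      unfolding act_s_def pg1 by (simp add: fun_eq_iff divide_inverse mult.commute)
  qed
  have q2: "quotient_given_by (Cpoly g c) (act_s_omega g) ([:-4, 0, 1:] * (dickson1 g + [:c:]))"
  proof (rule main[OF nonsq, where k = "- inverse (t*t)" and w = "(rf_X - inverse rf_X) * inverse t"])
    show "- inverse (t * t) * sig (- inverse (t * t)) = 1" using t0 by (simp add: st field_simps)
    show "- inverse (t * t) * - inverse (t * t) * rf_of_poly (Cpoly g c) = sig (rf_of_poly (Cpoly g c))"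
      unfolding sF hF using x0 t0 by (simp add: st field_simps)
    have "rf_X - inverse rf_X \<noteq> (0 :: 'a rf)"
    proof
      assume "rf_X - inverse rf_X = (0 :: 'a rf)"
      then have "rf_X * rf_X = (1 :: 'a rf)" using x0 by (simp add: field_simps)
      then have "rf_of_poly ([:0,1:] * [:0,1:]) = rf_of_poly (1 :: 'a poly)"
        by (simp only: rf_of_poly_mult rf_of_poly_X rf_of_poly_1)
      then have "[:0,1:] * [:0,1:] = (1 :: 'a poly)" by (simp only: rf_of_poly_eq_iff)
      then have "degree ([:0,1:] * [:0,1:] :: 'a poly) = degree (1 :: 'a poly)" by simp
      then show False by simp
    qed
    then show "(rf_X - inverse rf_X) * inverse t \<noteq> 0" using t0 by simp
    show "- inverse (t * t) * sig ((rf_X - inverse rf_X) * inverse t) = (rf_X - inverse rf_X) * inverse t"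
      using t0 x0 by (simp add: st field_simps)
    show "rf_eval ([:-4, 0, 1:] * (dickson1 g + [:c:])) u0 = (rf_X - inverse rf_X) * inverse t * ((rf_X - inverse rf_X) * inverse t) * rf_of_poly (Cpoly g c)"
      unfolding rf_eval_mult hD hF using x0 t0 by (simp add: st field_simps)
    show "act_s_omega g = (\<lambda>(a, b). (sig a, - inverse (t * t) * sig b))"
      unfolding act_s_omega_def pg1 by (simp add: fun_eq_iff divide_inverse mult.commute)
  qed
  show ?thesis using q1 q2 by blast
qed

lemma X_plus_nz: "rf_X + rf_const a \<noteq> (0 :: 'a::field rf)"
proof
  assume "rf_X + rf_const a = (0 :: 'a rf)"
  then have "rf_of_poly [:a, 1:] = rf_of_poly (0 :: 'a poly)" by (simp add: rf_of_poly_pCons add.commute)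
  then have "[:a, 1:] = (0 :: 'a poly)" by (simp only: rf_of_poly_eq_iff)
  then show False by simp
qed

lemma case_even:
  fixes c :: "'a::field"
  assumes gm: "g = 2*m" and g1: "g \<ge> 1"
  shows "quotient_given_by (Cpoly g c) (act_s g) ([:2, 1:] * (dickson1 g + [:c:]))
       \<and> quotient_given_by (Cpoly g c) (act_s_omega g) ([:-2, 1:] * (dickson1 g + [:c:]))"
proof -
  define t :: "'a rf" where "t = rf_X ^ m"
  have x0: "(rf_X :: 'a rf) \<noteq> 0" by simp
  have t0: "t \<noteq> 0" by (simp add: t_def)
  have st: "sig t = inverse t" by (simp add: t_def power_inverse)
  have pg: "rf_X^g = t*t" unfolding gm t_def by (simp add: mult_2 power_add)
  have "rf_X^(g+1) = rf_X * (rf_X :: 'a rf)^g" by simp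
  then have pg1: "rf_X^(g+1) = rf_X*t*t" using pg by simp
  have "rf_X^(2*g+1) = rf_X * ((rf_X :: 'a rf)^g * rf_X^g)" by (simp add: power_add[symmetric] mult_2)
  then have p2g1: "rf_X^(2*g+1) = rf_X*t*t*t*t" using pg by (simp add: mult.assoc)
  have hF: "rf_of_poly (Cpoly g c) = rf_X*t*t*t*t + rf_const c * (rf_X*t*t) + rf_X"
    unfolding hF_gen p2g1 pg1 ..
  have hD: "rf_eval (dickson1 g + [:c:]) (u0 :: 'a rf) = t*t + inverse (t*t) + rf_const c"
    unfolding hD_gen[OF g1] pg ..
  have nonsq: "\<And>r. r * r \<noteq> rf_of_poly (Cpoly g c)"
    by (rule nonsq_odd) (simp add: degree_Cpoly[OF g1])
  have xp1: "rf_X + 1 \<noteq> (0 :: 'a rf)" using X_plus_nz[of "1::'a"] by simp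
  have xm1: "rf_X - 1 \<noteq> (0 :: 'a rf)" using X_plus_nz[of "-1::'a"] by simp
  have q1: "quotient_given_by (Cpoly g c) (act_s g) ([:2, 1:] * (dickson1 g + [:c:]))"
  proof (rule main[OF nonsq, where k = "inverse (rf_X*t*t)" and w = "(rf_X + 1) * inverse (rf_X * t)"])
    show "inverse (rf_X*t*t) * sig (inverse (rf_X*t*t)) = 1" using t0 x0 by (simp add: st field_simps)
    show "inverse (rf_X*t*t) * inverse (rf_X*t*t) * rf_of_poly (Cpoly g c) = sig (rf_of_poly (Cpoly g c))"
      unfolding hF using x0 t0 by (simp add: st field_simps)
    show "(rf_X + 1) * inverse (rf_X * t) \<noteq> 0" using t0 xp1 by simp
    show "inverse (rf_X*t*t) * sig ((rf_X + 1) * inverse (rf_X * t)) = (rf_X + 1) * inverse (rf_X * t)"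
      using t0 x0 by (simp add: st field_simps)
    show "rf_eval ([:2, 1:] * (dickson1 g + [:c:])) u0 = (rf_X + 1) * inverse (rf_X * t) * ((rf_X + 1) * inverse (rf_X * t)) * rf_of_poly (Cpoly g c)"
      unfolding rf_eval_mult hD hF using x0 t0 by (simp add: st field_simps)
    show "act_s g = (\<lambda>(a, b). (sig a, inverse (rf_X*t*t) * sig b))"
      unfolding act_s_def pg1 by (simp add: fun_eq_iff divide_inverse mult.commute)
  qed
  have q2: "quotient_given_by (Cpoly g c) (act_s_omega g) ([:-2, 1:] * (dickson1 g + [:c:]))"
  proof (rule main[OF nonsq, where k = "- inverse (rf_X*t*t)" and w = "(rf_X - 1) * inverse (rf_X * t)"])
    show "- inverse (rf_X*t*t) * sig (- inverse (rf_X*t*t)) = 1" using t0 x0 by (simp add: st field_simps)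
    show "- inverse (rf_X*t*t) * - inverse (rf_X*t*t) * rf_of_poly (Cpoly g c) = sig (rf_of_poly (Cpoly g c))"
      unfolding hF using x0 t0 by (simp add: st field_simps)
    show "(rf_X - 1) * inverse (rf_X * t) \<noteq> 0" using t0 xm1 by simp
    show "- inverse (rf_X*t*t) * sig ((rf_X - 1) * inverse (rf_X * t)) = (rf_X - 1) * inverse (rf_X * t)"
      using t0 x0 by (simp add: st field_simps)
    show "rf_eval ([:-2, 1:] * (dickson1 g + [:c:])) u0 = (rf_X - 1) * inverse (rf_X * t) * ((rf_X - 1) * inverse (rf_X * t)) * rf_of_poly (Cpoly g c)"
      unfolding rf_eval_mult hD hF using x0 t0 by (simp add: st field_simps)
    show "act_s_omega g = (\<lambda>(a, b). (sig a, - inverse (rf_X*t*t) * sig b))"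
      unfolding act_s_omega_def pg1 by (simp add: fun_eq_iff divide_inverse mult.commute)
  qed
  show ?thesis using q1 q2 by blast
qed

theorem theorem1:
  fixes p n g :: nat and c :: "'a::field"
  assumes "finite (UNIV :: 'a set)"
    and "prime p" and "p > 2" and "card (UNIV :: 'a set) = p ^ n"
    and "g \<ge> 2" and "gcd g p = 1"
    and "coprime (Cpoly g c) (pderiv (Cpoly g c))"
  shows "quotient_given_by (Cpoly g c) (act_s g)
           (if odd g then dickson1 g + [:c:] else [:2, 1:] * (dickson1 g + [:c:]))
       \<and> quotient_given_by (Cpoly g c) (act_s_omega g)
           (if odd g then [:-4, 0, 1:] * (dickson1 g + [:c:]) else [:-2, 1:] * (dickson1 g + [:c:]))"
proof (cases "odd g")
  case True
  then obtain m where "g + 1 = 2 * m" by (metis odd_even_add odd_one evenE)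
  then show ?thesis using case_odd[of g m c] True assms(5) by simp
next
  case False
  then obtain m where "g = 2 * m" by (metis evenE)
  then show ?thesis using case_even[of g m c] False assms(5) by simp
qed



end
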